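(* Let $k\ge3$ be odd and $p_k^\star<p\le1$. There exists $\varepsilon=\varepsilon(p,k)>0$ such that for every finite graph $G=(V,E)$ without isolated vertices, every round $t\ge0$, every configuration $\bar{\mathbf x}$ and every $u\in V$, under the $(k,p,\mathcal B)$-Edge-Majority dynamics, $$\mathbb E\big[\phi_u^{(t+1)}\mid \mathbf X^{(t)}=\bar{\mathbf x}\big]\le(1-\varepsilon)\,\phi_{\max}^{(t)}.$$
   Context: $N(u)$ is the neighbourhood of $u$, $\delta_u=|N(u)|$. States are in $\{\mathcal R,\mathcal B\}$; $\mathbf X^{(t)}$ is the configuration at round $t$, $R^{(t)}$ the set of $\mathcal R$ nodes, $\phi_u^{(t)}=|N(u)\cap R^{(t)}|/\delta_u$ and $\phi^{(t)}_{\max}=\max_{u\in V}\phi_u^{(t)}$. $(k,p,\mathcal B)$-Edge-Majority: in each round every node $u$ independently samples $k$ neighbours uniformly with replacement; for each sampled $v$, independently, $u$ sees $v$ as $\mathcal B$ with probability $p$ and otherwise sees $v$'s true current state; $u$'s next state is the state seen more often. $F_{p,k}(x)=\Pr[\mathrm{Bin}(k,(1-p)x)\ge(k+1)/2]$. $p_k^\star\in[1/9,1/2)$ is the (unique) value such that for $0\le p<p_k^\star$ the equation $F_{p,k}(x)=x$ on $[0,1]$ has exactly three solutions, for $p=p_k^\star$ exactly two, and for $p>p_k^\star$ only $0$. *)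

theory Defs
  imports "HOL-Probability.Probability"
begin

text \<open>A finite graph on vertex set V (vertices are natural numbers, which is no loss
of generality since every finite graph is isomorphic to one on a subset of nat),
with symmetric, irreflexive adjacency relation E.  A configuration is a map
x :: nat => bool, where True means state R and False means state B.\<close>

definition is_graph :: "nat set \<Rightarrow> (nat \<Rightarrow> nat \<Rightarrow> bool) \<Rightarrow> bool" where
  "is_graph V E \<longleftrightarrow> finite V \<and> (\<forall>v w. E v w \<longrightarrow> v \<in> V \<and> w \<in> V \<and> E w v \<and> v \<noteq> w)"

definition nbhd :: "nat set \<Rightarrow> (nat \<Rightarrow> nat \<Rightarrow> bool) \<Rightarrow> nat \<Rightarrow> nat set" where
  "nbhd V E u = {v \<in> V. E u v}"

definition deg :: "nat set \<Rightarrow> (nat \<Rightarrow> nat \<Rightarrow> bool) \<Rightarrow> nat \<Rightarrow> nat" where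
  "deg V E u = card (nbhd V E u)"

definition phi :: "nat set \<Rightarrow> (nat \<Rightarrow> nat \<Rightarrow> bool) \<Rightarrow> (nat \<Rightarrow> bool) \<Rightarrow> nat \<Rightarrow> real" where
  "phi V E x u = real (card {v \<in> nbhd V E u. x v}) / real (deg V E u)"

definition phi_max :: "nat set \<Rightarrow> (nat \<Rightarrow> nat \<Rightarrow> bool) \<Rightarrow> (nat \<Rightarrow> bool) \<Rightarrow> real" where
  "phi_max V E x = Max ((\<lambda>u. phi V E x u) ` V)"

definition seen_sample :: "nat set \<Rightarrow> (nat \<Rightarrow> nat \<Rightarrow> bool) \<Rightarrow> real \<Rightarrow> (nat \<Rightarrow> bool) \<Rightarrow> nat \<Rightarrow> bool pmf" where
  "seen_sample V E p x u =
     do { v \<leftarrow> pmf_of_set (nbhd V E u);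
          noise \<leftarrow> bernoulli_pmf p;
          return_pmf (\<not> noise \<and> x v) }"

definition next_state :: "nat set \<Rightarrow> (nat \<Rightarrow> nat \<Rightarrow> bool) \<Rightarrow> nat \<Rightarrow> real \<Rightarrow> (nat \<Rightarrow> bool) \<Rightarrow> nat \<Rightarrow> bool pmf" where
  "next_state V E k p x u =
     map_pmf (\<lambda>l. 2 * length (filter id l) \<ge> k + 1) (replicate_pmf k (seen_sample V E p x u))"

text \<open>One round of (k,p,B)-Edge-Majority: all nodes update independently.
(Coordinates outside V are irrelevant and fixed to False.)\<close>
definition edge_majority_step :: "nat set \<Rightarrow> (nat \<Rightarrow> nat \<Rightarrow> bool) \<Rightarrow> nat \<Rightarrow> real \<Rightarrow> (nat \<Rightarrow> bool) \<Rightarrow> (nat \<Rightarrow> bool) pmf" where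
  "edge_majority_step V E k p x = Pi_pmf V False (\<lambda>u. next_state V E k p x u)"

definition F :: "real \<Rightarrow> nat \<Rightarrow> real \<Rightarrow> real" where
  "F p k x = measure_pmf.prob (binomial_pmf k ((1 - p) * x)) {j. 2 * j \<ge> k + 1}"

definition fixpoints :: "real \<Rightarrow> nat \<Rightarrow> real set" where
  "fixpoints p k = {x \<in> {0..1}. F p k x = x}"

definition p_star :: "nat \<Rightarrow> real" where
  "p_star k = (THE q. 1/9 \<le> q \<and> q < 1/2
      \<and> (\<forall>p. 0 \<le> p \<and> p < q \<longrightarrow> card (fixpoints p k) = 3)
      \<and> card (fixpoints q k) = 2
      \<and> (\<forall>p. q < p \<and> p \<le> 1 \<longrightarrow> fixpoints p k = {0}))"

end

theory Submission
  imports Defs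
begin


definition Gs :: "nat \<Rightarrow> real \<Rightarrow> real" where
  "Gs n y = (\<Sum>i=n..2*n. real ((2*n+1) choose Suc i) * y ^ Suc i * (1-y) ^ (2*n - i))"

definition gs :: "nat \<Rightarrow> real \<Rightarrow> real" where
  "gs n y = real (2*n+1) * real ((2*n) choose n) * (y*(1-y))^n"

definition bb :: "nat \<Rightarrow> real \<Rightarrow> nat \<Rightarrow> real" where
  "bb n y i = real ((2*n) choose i) * y ^ i * (1-y) ^ (2*n - i)"

lemma aux_ring: "(c0::real) * (a0 * u0 * z0 - v0 * (b0 * w0)) = (c0*a0) * (u0 * z0) - (c0*b0) * (v0*w0)"
  by (simp add: algebra_simps)

lemma term_deriv:
  assumes "i \<le> 2*n"
  shows "((\<lambda>y. real ((2*n+1) choose Suc i) * y ^ Suc i * (1-y) ^ (2*n - i)) has_real_derivative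
     real (2*n+1) * (bb n y i - bb n y (Suc i))) (at y)"
proof -
  have e1: "real ((2*n+1) choose Suc i) * real (Suc i) = real (2*n+1) * real ((2*n) choose i)"
    using Suc_times_binomial[of i "2*n"] by (metis Suc_eq_plus1 mult.commute of_nat_mult)
  have e2: "real ((2*n+1) choose Suc i) * real (2*n - i) = real (2*n+1) * real ((2*n) choose Suc i)"
    using binomial_absorb_comp[of "2*n+1" "Suc i"] by (metis diff_Suc_Suc add_diff_cancel_right' mult.commute of_nat_mult Suc_eq_plus1)
  have D: "((\<lambda>y. real ((2*n+1) choose Suc i) * y ^ Suc i * (1-y) ^ (2*n - i)) has_real_derivative
     real ((2*n+1) choose Suc i) * (real (Suc i) * y ^ i * (1-y) ^ (2*n - i)
        - y ^ Suc i * (real (2*n - i) * (1-y) ^ (2*n - i - 1)))) (at y)"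
  proof -
    have d1: "((\<lambda>y. y^Suc i) has_real_derivative real (Suc i) * y^i) (at y)"
      using DERIV_pow[of "Suc i" y] by simp
    have d2: "((\<lambda>y. (1-y)^(2*n-i)) has_real_derivative - (real (2*n-i) * (1-y)^(2*n-i-1))) (at y)"
      by (auto intro!: derivative_eq_intros)
    from DERIV_cmult[OF DERIV_mult[OF d1 d2], of "real ((2*n+1) choose Suc i)"]
    show ?thesis by (simp add: algebra_simps)
  qed
  have "real ((2*n+1) choose Suc i) * (real (Suc i) * y ^ i * (1-y) ^ (2*n - i)
        - y ^ Suc i * (real (2*n - i) * (1-y) ^ (2*n - i - 1)))
     = real (2*n+1) * real ((2*n) choose i) * y ^ i * (1-y) ^ (2*n - i)
        - real (2*n+1) * real ((2*n) choose Suc i) * y ^ Suc i * (1-y) ^ (2*n - i - 1)"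
    unfolding aux_ring e1 e2 by (simp only: mult.assoc)
  also have "\<dots> = real (2*n+1) * (bb n y i - bb n y (Suc i))"
    by (simp add: bb_def algebra_simps)
  finally show ?thesis using D by simp
qed

lemma Gs_deriv: "(Gs n has_real_derivative gs n y) (at y)"
proof -
  have "((\<lambda>y. Gs n y) has_real_derivative (\<Sum>i=n..2*n. real (2*n+1) * (bb n y i - bb n y (Suc i)))) (at y)"
    unfolding Gs_def by (rule DERIV_sum) (rule term_deriv, simp)
  moreover have "(\<Sum>i=n..2*n. real (2*n+1) * (bb n y i - bb n y (Suc i))) = gs n y"
  proof -
    have "(\<Sum>i=n..2*n. real (2*n+1) * (bb n y i - bb n y (Suc i)))
        = - (real (2*n+1) * (\<Sum>i=n..2*n. (bb n y (Suc i) - bb n y i)))"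
    proof -
      have "(\<Sum>i=n..2*n. real (2*n+1) * (bb n y i - bb n y (Suc i)))
         = real (2*n+1) * (\<Sum>i=n..2*n. (bb n y i - bb n y (Suc i)))"
        by (simp only: sum_distrib_left)
      also have "(\<Sum>i=n..2*n. (bb n y i - bb n y (Suc i))) = (\<Sum>i=n..2*n. - (bb n y (Suc i) - bb n y i))"
        by simp
      also have "\<dots> = - (\<Sum>i=n..2*n. (bb n y (Suc i) - bb n y i))"
        by (rule sum_negf)
      finally show ?thesis by (simp only: mult_minus_right)
    qed
    also have "(\<Sum>i=n..2*n. (bb n y (Suc i) - bb n y i)) = bb n y (Suc (2*n)) - bb n y n"
      by (rule sum_Suc_diff) simp
    also have "bb n y (Suc (2*n)) = 0" by (simp add: bb_def)
    also have "bb n y n = real ((2*n) choose n) * (y*(1-y))^n"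
    proof -
      have "2*n - n = n" by simp
      thus ?thesis unfolding bb_def power_mult_distrib by (simp only: mult.assoc)
    qed
    finally show ?thesis unfolding gs_def by simp
  qed
  ultimately show ?thesis by simp
qed



lemma Gs_0[simp]: "Gs n 0 = 0"
  by (simp add: Gs_def)

lemma Gs_1[simp]: "Gs n 1 = 1"
proof -
  have "Gs n 1 = (\<Sum>i=n..2*n. if i = 2*n then 1 else 0)"
    unfolding Gs_def by (rule sum.cong) (auto simp: power_0_left)
  also have "\<dots> = 1" by simp
  finally show ?thesis .
qed

lemma Gs_cont: "continuous_on A (Gs n)"
  by (rule continuous_at_imp_continuous_on) (simp add: DERIV_isCont[OF Gs_deriv])

definition gs1 :: "nat \<Rightarrow> real \<Rightarrow> real" where
  "gs1 n y = real (2*n+1) * real ((2*n) choose n) * (real n * (y*(1-y))^(n-1) * (1 - 2*y))"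

lemma gs_deriv: "(gs n has_real_derivative gs1 n y) (at y)"
proof -
  have d: "((\<lambda>y. y*(1-y)) has_real_derivative 1 - 2*y) (at y)"
    by (auto intro!: derivative_eq_intros)
  have "((\<lambda>y. (y*(1-y))^n) has_real_derivative real n * ((1 - 2*y) * (y*(1-y))^(n - Suc 0))) (at y)"
    by (rule DERIV_power[OF d])
  from DERIV_cmult[OF this, of "real (2*n+1) * real ((2*n) choose n)"]
  show ?thesis unfolding gs_def[abs_def] gs1_def by (simp add: algebra_simps)
qed

definition NN :: "nat \<Rightarrow> real \<Rightarrow> real" where
  "NN n y = y * gs n y - Gs n y"

lemma NN_deriv: "(NN n has_real_derivative y * gs1 n y) (at y)"
proof -
  have "((\<lambda>y. y * gs n y - Gs n y) has_real_derivative (1 * gs n y + gs1 n y * y) - gs n y) (at y)"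
    using DERIV_diff[OF DERIV_mult[OF DERIV_ident gs_deriv[of n y]] Gs_deriv[of n y]] by simp
  then show ?thesis by (simp add: NN_def[abs_def] mult.commute)
qed

lemma NN_cont: "continuous_on A (NN n)"
  by (rule continuous_at_imp_continuous_on) (simp add: DERIV_isCont[OF NN_deriv])

lemma NN_0[simp]: "NN n 0 = 0" by (simp add: NN_def)
lemma NN_1: "n \<ge> 1 \<Longrightarrow> NN n 1 = -1" by (simp add: NN_def gs_def)

lemma NN_inc: assumes "n \<ge> 1" "0 \<le> a" "a < b" "b \<le> 1/2" shows "NN n a < NN n b"
proof (rule DERIV_pos_imp_increasing_open[OF assms(3) _ NN_cont])
  fix x assume x: "a < x" "x < b"
  have "0 < x * (1-x)" using x assms by (intro mult_pos_pos) auto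
  hence "0 < (x * (1-x))^(n-1)" by simp
  moreover have "0 < real (2*n+1) * real ((2*n) choose n)" by simp
  moreover have "0 < 1 - 2*x" "0 < real n" "0 < x" using x assms by auto
  ultimately have "0 < x * gs1 n x" unfolding gs1_def
    by (metis mult_pos_pos)
  thus "\<exists>y. (NN n has_real_derivative y) (at x) \<and> 0 < y" using NN_deriv by blast
qed

lemma NN_dec: assumes "n \<ge> 1" "1/2 \<le> a" "a < b" "b \<le> 1" shows "NN n a > NN n b"
proof (rule DERIV_neg_imp_decreasing_open[OF assms(3) _ NN_cont])
  fix x assume x: "a < x" "x < b"
  have "0 < x * (1-x)" using x assms by (intro mult_pos_pos) auto
  hence "0 < (x * (1-x))^(n-1)" by simp
  moreover have "0 < real (2*n+1) * real ((2*n) choose n)" by simp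
  moreover have "0 < 2*x - 1" "0 < real n" "0 < x" using x assms by auto
  ultimately have "0 < x * (real (2*n+1) * real ((2*n) choose n) * (real n * (x*(1-x))^(n-1) * (2*x - 1)))"
    by (metis mult_pos_pos)
  hence "0 < x * (- gs1 n x)" unfolding gs1_def by (simp add: algebra_simps)
  thus "\<exists>y. (NN n has_real_derivative y) (at x) \<and> y < 0" using NN_deriv
    by (metis mult_minus_right neg_0_less_iff_less)
qed

lemma ys_exists:
  assumes "n \<ge> 1"
  shows "\<exists>ys. 1/2 < ys \<and> ys < 1 \<and> NN n ys = 0 \<and> (\<forall>y. 0 < y \<and> y < ys \<longrightarrow> NN n y > 0)
          \<and> (\<forall>y. ys < y \<and> y \<le> 1 \<longrightarrow> NN n y < 0)"
proof -
  have h0: "NN n (1/2) > 0" using NN_inc[OF assms, of 0 "1/2"] by simp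
  obtain ys where ys: "1/2 \<le> ys" "ys \<le> 1" "NN n ys = 0"
    using IVT2'[of "NN n" 1 0 "1/2", OF _ _ _ NN_cont] h0 NN_1[OF assms] by auto
  have "ys \<noteq> 1/2"
  proof
    assume a: "ys = 1/2"
    have "NN n (1/2) = 0" using ys(3) unfolding a .
    thus False using h0 by simp
  qed
  moreover have "ys \<noteq> 1" using ys NN_1[OF assms] by auto
  ultimately have ys2: "1/2 < ys" "ys < 1" using ys by auto
  have pos: "NN n y > 0" if y: "0 < y" "y < ys" for y
  proof (cases "y \<le> 1/2")
    case True thus ?thesis using NN_inc[OF assms, of 0 y] y by simp
  next
    case False thus ?thesis using NN_dec[OF assms, of y ys] y ys ys2 by simp
  qed
  have neg: "NN n y < 0" if y: "ys < y" "y \<le> 1" for y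
    using NN_dec[OF assms, of ys y] ys ys2 y by simp
  show ?thesis using ys ys2 pos neg by blast
qed

definition hh :: "nat \<Rightarrow> real \<Rightarrow> real" where
  "hh n y = Gs n y / y"

lemma hh_deriv: "y \<noteq> 0 \<Longrightarrow> (hh n has_real_derivative NN n y / (y*y)) (at y)"
proof -
  assume y: "y \<noteq> 0"
  have "((\<lambda>y. Gs n y / y) has_real_derivative (gs n y * y - Gs n y * 1) / (y * y)) (at y)"
    by (rule DERIV_divide[OF Gs_deriv DERIV_ident y])
  thus ?thesis by (simp add: hh_def[abs_def] NN_def algebra_simps)
qed

lemma hh_cont: "0 < a \<Longrightarrow> continuous_on {a..b} (hh n)"
  unfolding hh_def[abs_def] by (rule continuous_on_divide[OF Gs_cont continuous_on_id]) auto



lemma binom_b1: "(2*Suc n) choose (Suc n) = 2 * ((2*n+1) choose n)"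
proof -
  have "(2*Suc n) choose (Suc n) = (Suc (2*n+1)) choose (Suc n)" by simp
  also have "\<dots> = ((2*n+1) choose n) + ((2*n+1) choose (Suc n))" by simp
  also have "(2*n+1) choose (Suc n) = (2*n+1) choose n"
    using binomial_symmetric[of "Suc n" "2*n+1"] by simp
  finally show ?thesis by simp
qed

lemma binom_b2: "(2*n+1) * ((2*n) choose n) = (n+1) * ((2*n+1) choose n)"
proof -
  have "(2*n+1) * ((2*n) choose n) = ((2*n+1) choose (Suc n)) * (n+1)"
    using Suc_times_binomial_eq[of "2*n" n] by simp
  also have "(2*n+1) choose (Suc n) = (2*n+1) choose n"
    using binomial_symmetric[of "Suc n" "2*n+1"] by simp
  finally show ?thesis by simp
qed

lemma Gs_incr: "Gs (Suc n) y - Gs n y = real ((2*n+1) choose n) * (y*(1-y))^(Suc n) * (2*y-1)"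
proof -
  define c where "c = real ((2*n+1) choose n)"
  define D where "D = (\<lambda>y. Gs (Suc n) y - Gs n y - c * ((y*(1-y))^(Suc n) * (2*y-1)))"
  have der: "(D has_real_derivative 0) (at y)" for y
  proof -
    have ds: "((\<lambda>y. y*(1-y)) has_real_derivative 1-2*y) (at y)"
      by (auto intro!: derivative_eq_intros)
    have dp: "((\<lambda>y. (y*(1-y))^Suc n) has_real_derivative real (Suc n) * ((1-2*y) * (y*(1-y))^n)) (at y)"
      using DERIV_power[OF ds, of "Suc n"] by simp
    have dl: "((\<lambda>y. 2*y-1) has_real_derivative 2) (at y)"
      by (auto intro!: derivative_eq_intros)
    have dd: "(D has_real_derivative gs (Suc n) y - gs n y - c * (real (Suc n) * ((1-2*y) * (y*(1-y))^n) * (2*y-1) + 2 * (y*(1-y))^Suc n)) (at y)"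
      unfolding D_def
      by (intro DERIV_diff Gs_deriv DERIV_cmult DERIV_mult[OF dp dl])
    have g1: "gs (Suc n) y = real (2*n+3) * (2*c) * (y*(1-y)) * (y*(1-y))^n"
      unfolding gs_def c_def using binom_b1[of n] by simp
    have g0: "gs n y = (real n + 1) * c * (y*(1-y))^n"
      unfolding gs_def c_def using arg_cong[OF binom_b2[of n], of real] by (simp add: algebra_simps)
    have "gs (Suc n) y - gs n y - c * (real (Suc n) * ((1-2*y) * (y*(1-y))^n) * (2*y-1) + 2 * (y*(1-y))^Suc n) = 0"
      unfolding g1 g0 by (simp add: algebra_simps)
    with dd show ?thesis by simp
  qed
  have "D y = D 0" using DERIV_isconst_all[of D] der by blast
  hence "D y = 0" by (simp add: D_def)
  thus ?thesis by (simp add: D_def c_def algebra_simps)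
qed

lemma Gs_1_34: "Gs 1 (3/4) = 27/32"
  by (simp add: Gs_def numeral_2_eq_2 eval_nat_numeral)

lemma Gs_34: "n \<ge> 1 \<Longrightarrow> Gs n (3/4) \<ge> 27/32"
proof (induction n rule: nat_induct_at_least)
  case base thus ?case using Gs_1_34 unfolding One_nat_def by simp
next
  case (Suc n)
  have "Gs (Suc n) (3/4) - Gs n (3/4) \<ge> 0"
    unfolding Gs_incr by simp
  with Suc show ?case by simp
qed

lemma prob_Gs:
  assumes "0 \<le> y" "y \<le> 1"
  shows "measure_pmf.prob (binomial_pmf (2*n+1) y) {j. 2*n+1+1 \<le> 2*j} = Gs n y"
proof -
  let ?M = "binomial_pmf (2*n+1) y"
  have sub: "set_pmf ?M \<subseteq> {..2*n+1}"
    using assms by (auto simp: set_pmf_binomial_eq split: if_splits)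
  have "{j. 2*n+1+1 \<le> 2*j} \<inter> set_pmf ?M = {Suc n..Suc (2*n)} \<inter> set_pmf ?M"
    using sub by auto
  hence "measure_pmf.prob ?M {j. 2*n+1+1 \<le> 2*j} = measure_pmf.prob ?M {Suc n..Suc (2*n)}"
    by (metis measure_Int_set_pmf)
  also have "\<dots> = (\<Sum>j\<in>{Suc n..Suc (2*n)}. pmf ?M j)"
    by (rule measure_measure_pmf_finite) simp
  also have "\<dots> = (\<Sum>i\<in>{n..2*n}. pmf ?M (Suc i))"
    by (rule sum.shift_bounds_cl_Suc_ivl)
  also have "\<dots> = Gs n y"
    unfolding Gs_def using assms by (intro sum.cong) auto
  finally show ?thesis .
qed

lemma Gs_le1: "0 \<le> y \<Longrightarrow> y \<le> 1 \<Longrightarrow> Gs n y \<le> 1"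
  using prob_Gs[of y n] measure_pmf.prob_le_1 by metis

lemma Gs_nonneg: "0 \<le> y \<Longrightarrow> y \<le> 1 \<Longrightarrow> 0 \<le> Gs n y"
  using prob_Gs[of y n] measure_nonneg by metis

lemma hh_small:
  assumes "n \<ge> 1"
  shows "\<exists>a. 0 < a \<and> a < 1/2 \<and> hh n a < 1"
proof -
  have "((\<lambda>t. (Gs n t - Gs n 0) / (t - 0)) \<longlongrightarrow> gs n 0) (at 0)"
    using Gs_deriv[of n 0] unfolding has_field_derivative_iff by simp
  moreover have "gs n 0 = 0" using assms by (simp add: gs_def)
  ultimately have "(hh n \<longlongrightarrow> 0) (at 0)" by (simp add: hh_def[abs_def])
  hence "eventually (\<lambda>t. hh n t < 1) (at 0)"
    by (rule order_tendstoD) simp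
  then obtain d where d: "d > 0" "\<And>t. t \<noteq> 0 \<Longrightarrow> dist t 0 < d \<Longrightarrow> hh n t < 1"
    unfolding eventually_at by auto
  define a where "a = min (d/2) (1/4)"
  have "0 < a" "a < 1/2" "dist a 0 < d" using d by (auto simp: a_def)
  thus ?thesis using d(2)[of a] by auto
qed

definition SS :: "nat \<Rightarrow> real \<Rightarrow> real set" where
  "SS n L = {y. 0 < y \<and> y \<le> 1 \<and> Gs n y = L * y}"

lemma SS_iff: "y \<in> SS n L \<longleftrightarrow> 0 < y \<and> y \<le> 1 \<and> hh n y = L"
  by (auto simp: SS_def hh_def field_simps)

lemma main_count:
  assumes "n \<ge> 1"
  shows "\<exists>M. 9/8 \<le> M \<and> M < 2 \<and> (\<forall>y. 0 \<le> y \<and> y \<le> 1 \<longrightarrow> Gs n y \<le> M * y)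
     \<and> (\<forall>L. 1 \<le> L \<and> L < M \<longrightarrow> card (SS n L) = 2) \<and> card (SS n M) = 1
     \<and> (\<forall>L. M < L \<longrightarrow> SS n L = {})"
proof -
  obtain ys where ys: "1/2 < ys" "ys < 1" "NN n ys = 0"
    and pos: "\<And>y. 0 < y \<Longrightarrow> y < ys \<Longrightarrow> NN n y > 0"
    and neg: "\<And>y. ys < y \<Longrightarrow> y \<le> 1 \<Longrightarrow> NN n y < 0"
    using ys_exists[OF assms] by blast
  define M where "M = hh n ys"
  have inc: "hh n a < hh n b" if "0 < a" "a < b" "b \<le> ys" for a b
  proof (rule DERIV_pos_imp_increasing_open[OF that(2) _ hh_cont[OF that(1)]])
    fix x assume x: "a < x" "x < b"
    have "NN n x > 0" using pos[of x] x that by simp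
    moreover have "x * x > 0" using x that by simp
    ultimately have "NN n x / (x*x) > 0" by simp
    thus "\<exists>y. (hh n has_real_derivative y) (at x) \<and> 0 < y"
      using hh_deriv[of x n] x that by auto
  qed
  have dec: "hh n a > hh n b" if "ys \<le> a" "a < b" "b \<le> 1" for a b
  proof (rule DERIV_neg_imp_decreasing_open[OF that(2) _ hh_cont])
    fix x assume x: "a < x" "x < b"
    have "NN n x < 0" using neg[of x] x that by simp
    moreover have "x * x > 0" using x that ys by simp
    ultimately have "NN n x / (x*x) < 0" by (simp add: divide_neg_pos)
    thus "\<exists>y. (hh n has_real_derivative y) (at x) \<and> y < 0"
      using hh_deriv[of x n] x that ys by auto
  next
    show "0 < a" using that ys by simp
  qed
  have lt: "hh n y < M" if "0 < y" "y \<le> 1" "y \<noteq> ys" for y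
  proof (cases "y < ys")
    case True thus ?thesis using inc[of y ys] that by (simp add: M_def)
  next
    case False thus ?thesis using dec[of ys y] that by (simp add: M_def)
  qed
  have le: "hh n y \<le> M" if "0 < y" "y \<le> 1" for y
    using lt[OF that] by (cases "y = ys") (auto simp: M_def)
  have h1: "hh n 1 = 1" by (simp add: hh_def)
  have M1: "M \<ge> 9/8"
  proof -
    have "hh n (3/4) \<ge> 9/8" using Gs_34[OF assms] by (simp add: hh_def)
    thus ?thesis using le[of "3/4"] by simp
  qed
  have M2: "M < 2"
  proof -
    have "Gs n ys \<le> 1" using Gs_le1[of ys n] ys by simp
    hence "M \<le> 1 / ys" using ys by (simp add: M_def hh_def divide_right_mono)
    also have "1 / ys < 2" using ys by (simp add: field_simps)
    finally show ?thesis .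
  qed
  have bound: "Gs n y \<le> M * y" if "0 \<le> y" "y \<le> 1" for y
  proof (cases "y = 0")
    case True thus ?thesis by simp
  next
    case False
    hence "hh n y \<le> M" using le that by simp
    thus ?thesis using False that by (simp add: hh_def field_simps)
  qed
  obtain a where a: "0 < a" "a < 1/2" "hh n a < 1" using hh_small[OF assms] by blast
  have two: "card (SS n L) = 2" if L: "1 \<le> L" "L < M" for L
  proof -
    obtain y1 where y1: "a \<le> y1" "y1 \<le> ys" "hh n y1 = L"
      using IVT'[of "hh n" a L ys, OF _ _ _ hh_cont[OF a(1)]] a L ys by (auto simp: M_def)
    have y1': "y1 < ys" using y1 L by (cases "y1 = ys") (auto simp: M_def)
    obtain y2 where y2: "ys \<le> y2" "y2 \<le> 1" "hh n y2 = L"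
      using IVT2'[of "hh n" 1 L ys, OF _ _ _ hh_cont] a L ys h1 by (auto simp: M_def)
    have y2': "ys < y2" using y2 L by (cases "y2 = ys") (auto simp: M_def)
    have "SS n L = {y1, y2}"
    proof (intro set_eqI iffI)
      fix y assume "y \<in> SS n L"
      hence y: "0 < y" "y \<le> 1" "hh n y = L" by (auto simp: SS_iff)
      show "y \<in> {y1, y2}"
      proof (cases "y < ys")
        case True
        have "y = y1"
        proof (rule ccontr)
          assume "y \<noteq> y1"
          hence "y < y1 \<or> y1 < y" by auto
          thus False using inc[of y y1] inc[of y1 y] y y1 y1' True a by auto
        qed
        thus ?thesis by simp
      next
        case False
        have "y \<noteq> ys" using y L by (auto simp: M_def)
        hence yy: "ys < y" using False by simp
        have "y = y2"
        proof (rule ccontr)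
          assume "y \<noteq> y2"
          hence "y < y2 \<or> y2 < y" by auto
          thus False using dec[of y y2] dec[of y2 y] y y2 yy y2' by auto
        qed
        thus ?thesis by simp
      qed
    next
      fix y assume "y \<in> {y1, y2}"
      thus "y \<in> SS n L" using y1 y2 a by (auto simp: SS_iff)
    qed
    thus ?thesis using y1' y2' by simp
  qed
  have one: "SS n M = {ys}"
  proof (intro set_eqI iffI)
    fix y assume "y \<in> SS n M"
    thus "y \<in> {ys}" using lt[of y] by (auto simp: SS_iff)
  next
    fix y assume "y \<in> {ys}"
    thus "y \<in> SS n M" using ys by (auto simp: SS_iff M_def)
  qed
  have zero: "SS n L = {}" if "M < L" for L
    using le that by (auto simp: SS_iff) (meson not_le)
  show ?thesis using M1 M2 bound two one zero by auto
qed




lemma F_Gs: "k = 2*n+1 \<Longrightarrow> 0 \<le> (1-p)*x \<Longrightarrow> (1-p)*x \<le> 1 \<Longrightarrow> F p k x = Gs n ((1-p)*x)"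
  unfolding F_def using prob_Gs[of "(1-p)*x" n] by simp

lemma fix_char:
  assumes k: "k = 2*n+1" and p: "0 \<le> p" "p < 1"
  shows "fixpoints p k = insert 0 ((\<lambda>y. y/(1-p)) ` SS n (1/(1-p)))"
proof (intro set_eqI iffI)
  fix x assume "x \<in> fixpoints p k"
  hence x: "0 \<le> x" "x \<le> 1" "F p k x = x" by (auto simp: fixpoints_def)
  have c: "0 < 1-p" "1-p \<le> 1" using p by auto
  have y01: "0 \<le> (1-p)*x" "(1-p)*x \<le> 1" using x c by (auto simp: mult_le_one)
  show "x \<in> insert 0 ((\<lambda>y. y/(1-p)) ` SS n (1/(1-p)))"
  proof (cases "x = 0")
    case True thus ?thesis by simp
  next
    case False
    have "(1-p)*x \<in> SS n (1/(1-p))"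
      unfolding SS_def using x False c y01 F_Gs[OF k y01] by auto
    moreover have "x = ((1-p)*x)/(1-p)" using c by simp
    ultimately show ?thesis by blast
  qed
next
  fix x assume x: "x \<in> insert 0 ((\<lambda>y. y/(1-p)) ` SS n (1/(1-p)))"
  have c: "0 < 1-p" "1-p \<le> 1" using p by auto
  show "x \<in> fixpoints p k"
  proof (cases "x = 0")
    case True thus ?thesis using F_Gs[OF k, of p 0] by (simp add: fixpoints_def)
  next
    case False
    then obtain y where y: "y \<in> SS n (1/(1-p))" "x = y/(1-p)" using x by auto
    hence y': "0 < y" "y \<le> 1" "Gs n y = y/(1-p)" by (auto simp: SS_def)
    have "x \<le> 1" using Gs_le1[of y n] y' y by simp
    moreover have "0 \<le> x" using y y' c by simp
    moreover have "(1-p)*x = y" using y c by simp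
    ultimately show ?thesis using F_Gs[OF k, of p x] y' y by (simp add: fixpoints_def)
  qed
qed

lemma card_fix:
  assumes k: "k = 2*n+1" and p: "0 \<le> p" "p < 1" and fin: "finite (SS n (1/(1-p)))"
  shows "card (fixpoints p k) = Suc (card (SS n (1/(1-p))))"
proof -
  have c: "0 < 1-p" using p by simp
  have inj: "inj_on (\<lambda>y. y/(1-p)) (SS n (1/(1-p)))"
    using c by (auto simp: inj_on_def)
  have "0 \<notin> (\<lambda>y. y/(1-p)) ` SS n (1/(1-p))" using c by (auto simp: SS_def)
  thus ?thesis unfolding fix_char[OF assms(1-3)]
    using card_image[OF inj] fin by simp
qed

lemma fix_one: "k = 2*n+1 \<Longrightarrow> fixpoints 1 k = {0}"
  using F_Gs[of k n 1] by (auto simp: fixpoints_def)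

lemma p_star_char:
  assumes k: "k = 2*n+1" and n: "n \<ge> 1"
  shows "\<exists>M. 9/8 \<le> M \<and> M < 2 \<and> (\<forall>y. 0 \<le> y \<and> y \<le> 1 \<longrightarrow> Gs n y \<le> M * y) \<and> p_star k = 1 - 1/M"
proof -
  obtain M where M: "9/8 \<le> M" "M < 2" "\<forall>y. 0 \<le> y \<and> y \<le> 1 \<longrightarrow> Gs n y \<le> M * y"
     and two: "\<forall>L. 1 \<le> L \<and> L < M \<longrightarrow> card (SS n L) = 2" and one: "card (SS n M) = 1"
     and zero: "\<forall>L. M < L \<longrightarrow> SS n L = {}"
    using main_count[OF n] by blast
  define q where "q = 1 - 1/M"
  define P where "P = (\<lambda>q. 1/9 \<le> q \<and> q < 1/2
      \<and> (\<forall>p. 0 \<le> p \<and> p < q \<longrightarrow> card (fixpoints p k) = 3)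
      \<and> card (fixpoints q k) = 2
      \<and> (\<forall>p. q < p \<and> p \<le> 1 \<longrightarrow> fixpoints p k = {0}))"
  have Mpos: "M > 0" using M by simp
  have q1: "1/9 \<le> q" "q < 1/2" using M by (auto simp: q_def field_simps)
  have lt: "card (fixpoints p k) = 3" if "0 \<le> p" "p < q" for p
  proof -
    have "p < 1" using that q1 by simp
    have L: "1 \<le> 1/(1-p)" "1/(1-p) < M"
      using that \<open>p < 1\<close> Mpos by (auto simp: q_def field_simps)
    hence c2: "card (SS n (1/(1-p))) = 2" using two by blast
    hence "finite (SS n (1/(1-p)))" by (metis card.infinite zero_neq_numeral)
    thus ?thesis using card_fix[OF k that(1) \<open>p < 1\<close>] c2 by simp
  qed
  have eq: "card (fixpoints q k) = 2"
  proof -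
    have "q < 1" "0 \<le> q" using q1 by auto
    have "1/(1-q) = M" using Mpos by (simp add: q_def)
    hence c1: "card (SS n (1/(1-q))) = 1" using one by simp
    hence "finite (SS n (1/(1-q)))" by (metis card.infinite zero_neq_one)
    thus ?thesis using card_fix[OF k \<open>0 \<le> q\<close> \<open>q < 1\<close>] c1 by simp
  qed
  have gt: "fixpoints p k = {0}" if "q < p" "p \<le> 1" for p
  proof (cases "p = 1")
    case True thus ?thesis using fix_one[OF k] by simp
  next
    case False
    hence "p < 1" "0 \<le> p" using that q1 by auto
    have "M < 1/(1-p)"
      using that \<open>p < 1\<close> Mpos by (auto simp: q_def field_simps)
    hence "SS n (1/(1-p)) = {}" using zero by blast
    thus ?thesis unfolding fix_char[OF k \<open>0 \<le> p\<close> \<open>p < 1\<close>] by simp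
  qed
  have Pq: "P q" unfolding P_def using q1 lt eq gt by blast
  have uniq: "q' = q" if "P q'" for q'
  proof (rule ccontr)
    assume "q' \<noteq> q"
    hence "q' < q \<or> q < q'" by auto
    thus False
    proof
      assume a: "q' < q"
      define p where "p = (q' + q)/2"
      have "q' < p" "p \<le> 1" "0 \<le> p" "p < q" using a q1 that by (auto simp: p_def P_def)
      hence "fixpoints p k = {0}" "card (fixpoints p k) = 3" using that lt unfolding P_def by auto
      thus False by simp
    next
      assume a: "q < q'"
      define p where "p = (q' + q)/2"
      have "q < p" "p \<le> 1" "0 \<le> p" "p < q'" using a q1 that by (auto simp: p_def P_def)
      hence "fixpoints p k = {0}" "card (fixpoints p k) = 3" using that gt unfolding P_def by auto
      thus False by simp
    qed
  qed
  have "p_star k = q"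
    unfolding p_star_def using the_equality[of P q, OF Pq uniq] unfolding P_def by simp
  thus ?thesis using M q_def by blast
qed



lemma inner_True: "0 \<le> p \<Longrightarrow> p \<le> 1 \<Longrightarrow>
   pmf (bernoulli_pmf p \<bind> (\<lambda>noise. return_pmf (\<not> noise \<and> b))) True = (1-p) * of_bool b"
  by (simp add: pmf_bind)

lemma phi_01: "finite (nbhd V E u) \<Longrightarrow> 0 \<le> phi V E x u \<and> phi V E x u \<le> 1"
  unfolding phi_def deg_def
  using card_mono[of "nbhd V E u" "{v \<in> nbhd V E u. x v}"] by (auto simp: divide_le_eq_1)

lemma seen_bern:
  assumes fin: "finite (nbhd V E v)" and ne: "nbhd V E v \<noteq> {}" and p: "0 \<le> p" "p \<le> 1"
  shows "seen_sample V E p x v = bernoulli_pmf ((1-p) * phi V E x v)"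
proof -
  let ?N = "nbhd V E v"
  have ph: "0 \<le> phi V E x v" "phi V E x v \<le> 1" using phi_01[OF fin] by auto
  have r01: "0 \<le> (1-p) * phi V E x v" "(1-p) * phi V E x v \<le> 1"
    using ph p by (auto simp: mult_le_one)
  have T: "pmf (seen_sample V E p x v) True = (1-p) * phi V E x v"
  proof -
    have "pmf (seen_sample V E p x v) True
        = (\<Sum>w\<in>?N. pmf (bernoulli_pmf p \<bind> (\<lambda>noise. return_pmf (\<not> noise \<and> x w))) True) / real (card ?N)"
      unfolding seen_sample_def pmf_bind integral_pmf_of_set[OF ne fin] by simp
    also have "\<dots> = (\<Sum>w\<in>?N. (1-p) * of_bool (x w)) / real (card ?N)"
      using inner_True[OF p] by simp
    also have "\<dots> = (1-p) * real (card (?N \<inter> {w. x w})) / real (card ?N)"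
      using fin by (simp add: sum_distrib_left[symmetric])
    also have "?N \<inter> {w. x w} = {w\<in>?N. x w}" by auto
    finally show ?thesis by (simp add: phi_def deg_def)
  qed
  show ?thesis
  proof (rule pmf_eqI)
    fix i :: bool
    show "pmf (seen_sample V E p x v) i = pmf (bernoulli_pmf ((1-p) * phi V E x v)) i"
      using T r01 by (cases i) (simp_all add: pmf_False_conv_True[of "seen_sample V E p x v"])
  qed
qed

lemma next_True:
  assumes fin: "finite (nbhd V E v)" and ne: "nbhd V E v \<noteq> {}" and p: "0 \<le> p" "p \<le> 1"
  shows "pmf (next_state V E k p x v) True = F p k (phi V E x v)"
proof -
  let ?r = "(1-p) * phi V E x v"
  have ph: "0 \<le> phi V E x v" "phi V E x v \<le> 1" using phi_01[OF fin] by auto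
  have r01: "?r \<in> {0..1}"
    using ph p by (auto simp: mult_le_one)
  have "next_state V E k p x v = map_pmf (\<lambda>j. k + 1 \<le> 2 * j) (map_pmf (length \<circ> filter id) (replicate_pmf k (bernoulli_pmf ?r)))"
    unfolding next_state_def seen_bern[OF assms] map_pmf_comp by (simp add: o_def)
  also have "\<dots> = map_pmf (\<lambda>j. k + 1 \<le> 2 * j) (binomial_pmf k ?r)"
    using binomial_pmf_altdef[OF r01] by simp
  finally have "pmf (next_state V E k p x v) True = measure_pmf.prob (binomial_pmf k ?r) ((\<lambda>j. k + 1 \<le> 2 * j) -` {True})"
    by (simp add: pmf_map)
  also have "(\<lambda>j. k + 1 \<le> 2 * j) -` {True} = {j. 2 * j \<ge> k + 1}" by auto
  finally show ?thesis by (simp add: F_def)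
qed

lemma expect_phi:
  assumes g: "is_graph V E" and ne: "\<forall>v\<in>V. nbhd V E v \<noteq> {}" and u: "u \<in> V" and p: "0 \<le> p" "p \<le> 1"
  shows "measure_pmf.expectation (edge_majority_step V E k p x) (\<lambda>y. phi V E y u)
     = (\<Sum>v\<in>nbhd V E u. F p k (phi V E x v)) / real (deg V E u)"
proof -
  let ?P = "edge_majority_step V E k p x"
  let ?N = "nbhd V E u"
  have finV: "finite V" using g by (simp add: is_graph_def)
  have NV: "?N \<subseteq> V" by (auto simp: nbhd_def)
  have finN: "\<And>w. finite (nbhd V E w)" using finV by (auto simp: nbhd_def)
  have phi_eq: "phi V E y u = (\<Sum>v\<in>?N. of_bool (y v)) / real (deg V E u)" for y
  proof -
    have "?N \<inter> {v. y v} = {v\<in>?N. y v}" by auto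
    thus ?thesis using finN[of u] by (simp add: phi_def)
  qed
  have int: "integrable (measure_pmf ?P) (\<lambda>y. of_bool (y v) :: real)" for v
    by (rule measure_pmf.integrable_const_bound[where B=1]) auto
  have comp: "measure_pmf.expectation ?P (\<lambda>y. of_bool (y v) :: real) = F p k (phi V E x v)" if v: "v \<in> ?N" for v
  proof -
    have vV: "v \<in> V" using v NV by auto
    have "measure_pmf.expectation ?P (\<lambda>y. of_bool (y v) :: real)
        = measure_pmf.expectation (map_pmf (\<lambda>f. f v) ?P) (\<lambda>b. of_bool b :: real)" by simp
    also have "map_pmf (\<lambda>f. f v) ?P = next_state V E k p x v"
      unfolding edge_majority_step_def by (subst Pi_pmf_component[OF finV]) (simp add: vV)
    also have "measure_pmf.expectation (next_state V E k p x v) (\<lambda>b. of_bool b :: real) = pmf (next_state V E k p x v) True"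
      by (subst integral_measure_pmf[of "{True}"]) auto
    also have "\<dots> = F p k (phi V E x v)"
      using next_True[OF finN ne[rule_format, OF vV] p] .
    finally show ?thesis .
  qed
  have "measure_pmf.expectation ?P (\<lambda>y. phi V E y u)
      = measure_pmf.expectation ?P (\<lambda>y. (\<Sum>v\<in>?N. of_bool (y v))) / real (deg V E u)"
    unfolding phi_eq by simp
  also have "measure_pmf.expectation ?P (\<lambda>y. (\<Sum>v\<in>?N. of_bool (y v) :: real)) = (\<Sum>v\<in>?N. measure_pmf.expectation ?P (\<lambda>y. of_bool (y v)))"
    using int by (intro Bochner_Integration.integral_sum) auto
  also have "\<dots> = (\<Sum>v\<in>?N. F p k (phi V E x v))"
    by (rule sum.cong) (auto simp: comp)
  finally show ?thesis .
qed


theorem lemma5p5: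
  fixes k :: nat and p :: real
  assumes "odd k" and "k \<ge> 3" and "p_star k < p" and "p \<le> 1"
  shows "\<exists>\<epsilon>>0. \<forall>(V::nat set) E x u.
           is_graph V E \<and> (\<forall>v\<in>V. nbhd V E v \<noteq> {}) \<and> u \<in> V \<longrightarrow>
           measure_pmf.expectation (edge_majority_step V E k p x) (\<lambda>y. phi V E y u)
             \<le> (1 - \<epsilon>) * phi_max V E x"
proof -
  obtain n where k: "k = 2*n+1" using assms(1) oddE by (metis Suc_eq_plus1 mult_2)
  have n: "n \<ge> 1" using assms(2) k by simp
  obtain M where M: "9/8 \<le> M" "M < 2" and bnd: "\<forall>y. 0 \<le> y \<and> y \<le> 1 \<longrightarrow> Gs n y \<le> M * y"
    and ps: "p_star k = 1 - 1/M"
    using p_star_char[OF k n] by blast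
  have "1/M \<le> 1" using M by simp
  hence p0: "0 \<le> p" using assms(3) ps by linarith
  have pM: "(1-p) * M < 1"
  proof -
    have "1 - p < 1/M" using assms(3) ps by simp
    thus ?thesis using M by (simp add: field_simps)
  qed
  define \<epsilon> where "\<epsilon> = 1 - (1-p) * M"
  have eps: "\<epsilon> > 0" using pM by (simp add: \<epsilon>_def)
  show ?thesis
  proof (intro exI[of _ \<epsilon>] conjI eps allI impI)
    fix V :: "nat set" and E x u
    assume H: "is_graph V E \<and> (\<forall>v\<in>V. nbhd V E v \<noteq> {}) \<and> u \<in> V"
    hence g: "is_graph V E" and ne: "\<forall>v\<in>V. nbhd V E v \<noteq> {}" and u: "u \<in> V" by auto
    have finV: "finite V" using g by (simp add: is_graph_def)
    have NV: "nbhd V E u \<subseteq> V" by (auto simp: nbhd_def)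
    have finN: "\<And>w. finite (nbhd V E w)" using finV by (auto simp: nbhd_def)
    let ?m = "phi_max V E x"
    have each: "F p k (phi V E x v) \<le> (1-p) * M * ?m" if v: "v \<in> nbhd V E u" for v
    proof -
      have ph: "0 \<le> phi V E x v" "phi V E x v \<le> 1" using phi_01[OF finN] by auto
      have y01: "0 \<le> (1-p) * phi V E x v" "(1-p) * phi V E x v \<le> 1"
        using ph p0 assms(4) by (auto simp: mult_le_one)
      have "F p k (phi V E x v) = Gs n ((1-p) * phi V E x v)" using F_Gs[OF k y01] .
      also have "\<dots> \<le> M * ((1-p) * phi V E x v)" using bnd y01 by blast
      also have "phi V E x v \<le> ?m"
        unfolding phi_max_def using finV v NV by (intro Max_ge) auto
      hence "M * ((1-p) * phi V E x v) \<le> M * ((1-p) * ?m)"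
        using M p0 assms(4) by (intro mult_left_mono) auto
      finally show ?thesis by (simp add: algebra_simps)
    qed
    have dpos: "real (deg V E u) > 0"
      using ne u finN[of u] by (simp add: deg_def card_gt_0_iff)
    have "measure_pmf.expectation (edge_majority_step V E k p x) (\<lambda>y. phi V E y u)
       = (\<Sum>v\<in>nbhd V E u. F p k (phi V E x v)) / real (deg V E u)"
      using expect_phi[OF g ne u p0 assms(4)] .
    also have "\<dots> \<le> (\<Sum>v\<in>nbhd V E u. (1-p) * M * ?m) / real (deg V E u)"
      using dpos each by (intro divide_right_mono sum_mono) auto
    also have "\<dots> = (1-p) * M * ?m" using dpos by (simp add: deg_def)
    also have "\<dots> = (1 - \<epsilon>) * ?m" by (simp add: \<epsilon>_def)
    finally show "measure_pmf.expectation (edge_majority_step V E k p x) (\<lambda>y. phi V E y u) \<le> (1 - \<epsilon>) * ?m" .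
  qed
qed

end
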